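(* Let $\Bbbk$ be a field, $n\ge2$, $q\in\Bbbk$ a primitive $n$-th root of unity, $C_n=\langle g\rangle$ the cyclic group of order $n$ and $A$ a unital associative $\Bbbk$-algebra. Let $\cdot:\Bbbk C_n\otimes A\to A$ be a partial action of $\Bbbk C_n$ on $A$. Then for each $w\in A$ such that $g^i\cdot w=q^{-i}(g^i\cdot1_A)w$ for all $0\le i\le n-1$, one has $(g^i\cdot w)^\ell=q^{-i\ell}(g^i\cdot1_A)w^\ell$ for all $\ell\ge1$ and $0\le i\le n-1$. Moreover, if the partial action is symmetric, then $(g^i\cdot w)^\ell=q^{-i\ell}w^\ell(g^i\cdot1_A)$.
   Context: $\Bbbk C_n$ is the group Hopf algebra with $g$ group-like. A partial action of a bialgebra $H$ on $A$ is a linear map $\cdot:H\otimes A\to A$ with $1_H\cdot a=a$, $h\cdot(ab)=(h_1\cdot a)(h_2\cdot b)$, $h\cdot(k\cdot a)=(h_1\cdot1_A)(h_2k\cdot a)$; it is symmetric if moreover $h\cdot(k\cdot a)=(h_1k\cdot a)(h_2\cdot1_A)$. *)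

theory Defs
  imports Complex_Main
begin

definition kalgebra :: "('k::field \<Rightarrow> 'a::ring_1 \<Rightarrow> 'a) \<Rightarrow> bool" where
  "kalgebra smul \<longleftrightarrow> Vector_Spaces.vector_space smul \<and>
     (\<forall>c a b. smul c (a * b) = smul c a * b \<and> smul c (a * b) = a * smul c b)"

definition prim_root :: "nat \<Rightarrow> 'k::field \<Rightarrow> bool" where
  "prim_root n q \<longleftrightarrow> q ^ n = 1 \<and> (\<forall>k. 0 < k \<and> k < n \<longrightarrow> q ^ k \<noteq> 1)"

text \<open>A linear map  k C_n \<otimes> A \<rightarrow> A  is the same as a family of n linear maps
  act i = (g^i \<cdot> _), i = 0..n-1 (the basis g^0,...,g^(n-1) of k C_n).
  Since the partial-action axioms are linear in h and k, and g^i is group-like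
  (\<Delta>(g^i) = g^i \<otimes> g^i), they are equivalent to the axioms on basis elements.\<close>
definition partial_action_Cn ::
  "('k::field \<Rightarrow> 'a::ring_1 \<Rightarrow> 'a) \<Rightarrow> nat \<Rightarrow> (nat \<Rightarrow> 'a \<Rightarrow> 'a) \<Rightarrow> bool" where
  "partial_action_Cn smul n act \<longleftrightarrow>
     (\<forall>i<n. Vector_Spaces.linear smul smul (act i)) \<and>
     (\<forall>a. act 0 a = a) \<and>
     (\<forall>i<n. \<forall>a b. act i (a * b) = act i a * act i b) \<and>
     (\<forall>i<n. \<forall>j<n. \<forall>a. act i (act j a) = act i 1 * act ((i + j) mod n) a)"

definition symmetric_partial_action_Cn ::
  "('k::field \<Rightarrow> 'a::ring_1 \<Rightarrow> 'a) \<Rightarrow> nat \<Rightarrow> (nat \<Rightarrow> 'a \<Rightarrow> 'a) \<Rightarrow> bool" where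
  "symmetric_partial_action_Cn smul n act \<longleftrightarrow>
     partial_action_Cn smul n act \<and>
     (\<forall>i<n. \<forall>j<n. \<forall>a. act i (act j a) = act ((i + j) mod n) a * act i 1)"

end

theory Submission
  imports Defs
begin

lemma smul_mult:
  assumes "kalgebra smul"
  shows "smul c x * smul d y = smul (c * d) (x * y)"
proof -
  have vs: "Vector_Spaces.vector_space smul" and b: "\<And>c a b. smul c (a * b) = smul c a * b"
    "\<And>c a b. smul c (a * b) = a * smul c b"
    using assms unfolding kalgebra_def by metis+
  have "smul c x * smul d y = smul c (x * smul d y)" using b(1) by metis
  also have "\<dots> = smul c (smul d (x * y))" using b(2) by metis
  also have "\<dots> = smul (c * d) (x * y)" using vs[unfolded Vector_Spaces.vector_space_def] by metis
  finally show ?thesis .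
qed

lemma smul_pow:
  assumes "kalgebra smul"
  shows "(smul c x) ^ l = smul (c ^ l) (x ^ l)"
proof (induction l)
  case 0
  have vs: "Vector_Spaces.vector_space smul" using assms unfolding kalgebra_def by auto
  then show ?case using vs[unfolded Vector_Spaces.vector_space_def] by (metis power_0)
next
  case (Suc l)
  then show ?case using smul_mult[OF assms] by (simp add: mult.commute)
qed

lemma ew_pow:
  fixes e w :: "'a::ring_1"
  assumes "e * w = e * w * e" "e * e = e"
  shows "(e * w) ^ l = e * w ^ l \<or> l = 0"
proof (induction l)
  case 0 then show ?case by simp
next
  case (Suc l)
  show ?case
  proof (cases "l = 0")
    case True then show ?thesis by simp
  next
    case False
    with Suc have "(e * w) ^ l = e * w ^ l" by simp
    then have "(e * w) ^ Suc l = e * w * (e * w ^ l)" by (simp add: power_Suc)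
    also have "\<dots> = (e * w * e) * w ^ l" by (simp add: mult.assoc)
    also have "\<dots> = e * w * w ^ l" using assms(1) by simp
    also have "\<dots> = e * w ^ Suc l" by (simp add: mult.assoc power_Suc)
    finally show ?thesis by simp
  qed
qed

theorem lemma3p5:
  fixes smul :: "'k::field \<Rightarrow> 'a::ring_1 \<Rightarrow> 'a"
    and n :: nat and q :: 'k and act :: "nat \<Rightarrow> 'a \<Rightarrow> 'a" and w :: 'a
  assumes "kalgebra smul"
    and "n \<ge> 2"
    and "prim_root n q"
    and "partial_action_Cn smul n act"
    and "\<forall>i<n. act i w = smul (inverse q ^ i) (act i 1 * w)"
  shows "(\<forall>i<n. \<forall>l\<ge>1. act i w ^ l = smul (inverse q ^ (i * l)) (act i 1 * w ^ l))
       \<and> (symmetric_partial_action_Cn smul n act \<longrightarrow>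
          (\<forall>i<n. \<forall>l\<ge>1. act i w ^ l = smul (inverse q ^ (i * l)) (w ^ l * act i 1)))"
proof -
  have vs: "Vector_Spaces.vector_space smul" using assms(1) unfolding kalgebra_def by auto
  have b: "\<And>c a b. smul c (a * b) = smul c a * b" "\<And>c a b. smul c (a * b) = a * smul c b"
    using assms(1) unfolding kalgebra_def by metis+
  have q0: "q \<noteq> 0" using assms(2,3) unfolding prim_root_def
    by (metis power_0_left not_numeral_le_zero zero_neq_one le0 le_antisym)
  have pa: "\<And>i a b. i < n \<Longrightarrow> act i (a * b) = act i a * act i b"
    "\<And>a. act 0 a = a"
    "\<And>i j a. i < n \<Longrightarrow> j < n \<Longrightarrow> act i (act j a) = act i 1 * act ((i + j) mod n) a"
    using assms(4) unfolding partial_action_Cn_def by auto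
  have main: "act i w ^ l = smul (inverse q ^ (i * l)) (act i 1 * w ^ l)"
    if i: "i < n" and l: "l \<ge> 1" for i l
  proof -
    define e where "e = act i 1"
    define c where "c = inverse q ^ i"
    have c0: "c \<noteq> 0" using q0 unfolding c_def by simp
    have ee: "e * e = e" using pa(1)[OF i, of 1 1] unfolding e_def by simp
    have aw: "act i w = smul c (e * w)" using assms(5) i unfolding c_def e_def by auto
    have "act i w = act i w * e" using pa(1)[OF i, of w 1] unfolding e_def by simp
    then have "smul c (e * w) = smul c (e * w * e)" using aw b(1) by metis
    then have ewe: "e * w = e * w * e" using c0 Vector_Spaces.vector_space.scale_cancel_left[OF vs] by blast
    have "act i w ^ l = smul (c ^ l) ((e * w) ^ l)" using aw smul_pow[OF assms(1)] by metis
    also have "\<dots> = smul (c ^ l) (e * w ^ l)" using ew_pow[OF ewe ee, of l] l by auto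
    finally show ?thesis unfolding c_def e_def by (simp add: power_mult)
  qed
  have sym: "act i w ^ l = smul (inverse q ^ (i * l)) (w ^ l * act i 1)"
    if s: "symmetric_partial_action_Cn smul n act" and i: "i < n" and l: "l \<ge> 1" for i l
  proof -
    have comm: "w * act i 1 = act i 1 * w"
    proof (cases "i = 0")
      case True then show ?thesis using pa(2) by simp
    next
      case False
      have j: "n - i < n" using False i by simp
      have m: "(i + (n - i)) mod n = 0" using i by simp
      have "act i (act (n - i) w) = act 0 w * act i 1"
        using s i j m unfolding symmetric_partial_action_Cn_def by metis
      moreover have "act i (act (n - i) w) = act i 1 * act 0 w" using pa(3)[OF i j, of w] m by simp
      ultimately show ?thesis using pa(2) by simp
    qed
    have "w ^ l * act i 1 = act i 1 * w ^ l"
    proof (induction l)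
      case 0 then show ?case by simp
    next
      case (Suc l)
      have "w ^ Suc l * act i 1 = w ^ l * (w * act i 1)" by (simp only: power_Suc2 mult.assoc)
      also have "\<dots> = (w ^ l * act i 1) * w" using comm by (simp add: mult.assoc)
      also have "\<dots> = act i 1 * w ^ Suc l" using Suc by (simp add: power_Suc2 mult.assoc power_commutes)
      finally show ?case .
    qed
    then show ?thesis using main[OF i l] by simp
  qed
  show ?thesis using main sym by blast
qed

end
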